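(* Suppose $\operatorname{tr}\big((I-\widehat\Pi)\Pi^*\big)\le\delta^2$ for some $\delta\in[0,1)$. Then for every $x\in\mathbb R^d$, $$|\Pi^*x|\le|\widehat\Pi^{1/2}x|+\delta|x|.$$
   Context: $\Pi^*$ is the orthogonal projector onto an $m^*$-dimensional subspace of $\mathbb R^d$. $I$ is the $d\times d$ identity, $|\cdot|$ the Euclidean norm, $A\preceq B$ means $B-A$ is positive semidefinite. Let $\hat\beta_1,\dots,\hat\beta_L\in\mathbb R^d$ be arbitrary vectors, $\mathcal A_{m^*}=\{\Pi\in\mathbb R^{d\times d}:\Pi=\Pi^\top,\ 0\preceq\Pi\preceq I,\ \operatorname{tr}\Pi\le m^*\}$, and let $\widehat\Pi$ be a minimizer over $\Pi\in\mathcal A_{m^*}$ of $\max_\ell\hat\beta_\ell^\top(I-\Pi)\hat\beta_\ell$; $\widehat\Pi^{1/2}$ is its positive semidefinite square root. *)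

theory Defs
  imports "HOL-Analysis.Analysis"
begin

definition psd :: "real^'n^'n \<Rightarrow> bool" where
  "psd A \<longleftrightarrow> transpose A = A \<and> (\<forall>x. 0 \<le> x \<bullet> (A *v x))"

definition loewner_le :: "real^'n^'n \<Rightarrow> real^'n^'n \<Rightarrow> bool" where
  "loewner_le A B \<longleftrightarrow> psd (B - A)"

definition orth_projector :: "real^'n^'n \<Rightarrow> nat \<Rightarrow> bool" where
  "orth_projector P m \<longleftrightarrow> transpose P = P \<and> P ** P = P \<and> rank P = m"

definition feasible_set :: "nat \<Rightarrow> (real^'n^'n) set" where
  "feasible_set m = {P. transpose P = P \<and> loewner_le 0 P \<and> loewner_le P (mat 1) \<and> trace P \<le> real m}"

definition objective :: "nat \<Rightarrow> (nat \<Rightarrow> real^'n) \<Rightarrow> real^'n^'n \<Rightarrow> real" where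
  "objective L \<beta> P = Max ((\<lambda>l. \<beta> l \<bullet> ((mat 1 - P) *v \<beta> l)) ` {1..L})"

end

theory Submission
  imports Defs
begin

lemma sym_adj:
  fixes A :: "real^'n^'n"
  assumes "transpose A = A"
  shows "(A *v x) \<bullet> y = x \<bullet> (A *v y)"
  by (metis assms dot_lmul_matrix vector_transpose_matrix)

lemma quad_disc:
  fixes a b c :: real
  assumes "\<forall>t. 0 \<le> a + 2*t*b + t^2*c" and "0 \<le> c"
  shows "b^2 \<le> a*c"
proof (cases "c = 0")
  case True
  show ?thesis
  proof (cases "b = 0")
    case False
    have "0 \<le> a + 2*(-(a+1)/(2*b))*b + (-(a+1)/(2*b))^2*c" using assms(1) by blast
    then show ?thesis using False True by (simp add: field_simps)
  qed (simp add: True)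
next
  case False
  then have cp: "c > 0" using assms(2) by simp
  have "0 \<le> a + 2*(-b/c)*b + (-b/c)^2*c" using assms(1) by blast
  then have "0 \<le> a - b^2/c" using cp by (simp add: field_simps power2_eq_square)
  then have "b^2/c \<le> a" by simp
  then show ?thesis using cp by (simp add: pos_divide_le_eq)
qed

lemma psd_cs:
  fixes M :: "real^'n^'n"
  assumes sym: "transpose M = M" and pos: "\<forall>x. 0 \<le> x \<bullet> (M *v x)"
  shows "(u \<bullet> (M *v v))^2 \<le> (u \<bullet> (M *v u)) * (v \<bullet> (M *v v))"
proof -
  have vu: "v \<bullet> (M *v u) = u \<bullet> (M *v v)"
    using sym_adj[OF sym, of v u] by (simp add: inner_commute)
  have "\<forall>t. 0 \<le> u \<bullet> (M *v u) + 2*t*(u \<bullet> (M *v v)) + t^2*(v \<bullet> (M *v v))"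
  proof
    fix t :: real
    have "0 \<le> (u + t *\<^sub>R v) \<bullet> (M *v (u + t *\<^sub>R v))" using pos by blast
    also have "\<dots> = u \<bullet> (M *v u) + 2*t*(u \<bullet> (M *v v)) + t^2*(v \<bullet> (M *v v))"
      using vu by (simp add: matrix_vector_right_distrib matrix_vector_mult_scaleR
          inner_add_left inner_add_right power2_eq_square algebra_simps)
    finally show "0 \<le> u \<bullet> (M *v u) + 2*t*(u \<bullet> (M *v v)) + t^2*(v \<bullet> (M *v v))" .
  qed
  then show ?thesis using quad_disc pos by blast
qed

lemma trace_bound:
  fixes M :: "real^'n^'n"
  assumes sym: "transpose M = M" and pos: "\<forall>x. 0 \<le> x \<bullet> (M *v x)"
  shows "y \<bullet> (M *v y) \<le> (norm y)^2 * trace M"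
proof -
  define q where "q = y \<bullet> (M *v y)"
  have q0: "0 \<le> q" using pos q_def by blast
  have diag: "axis i 1 \<bullet> (M *v axis i 1) = M$i$i" for i
    by (simp add: inner_axis' matrix_vector_mult_basis column_def)
  have d0: "0 \<le> M$i$i" for i using pos diag by metis
  have comp: "\<bar>(M *v y)$i\<bar> \<le> sqrt (M$i$i) * sqrt q" for i
  proof -
    have "((M *v y)$i)^2 \<le> M$i$i * q"
      using psd_cs[OF sym pos, of "axis i 1" y] diag q_def by (simp add: inner_axis')
    then have "sqrt (((M *v y)$i)^2) \<le> sqrt (M$i$i * q)" using real_sqrt_le_mono by blast
    then show ?thesis by (simp add: real_sqrt_mult)
  qed
  define T where "T = (\<Sum>i\<in>UNIV. \<bar>y$i\<bar> * sqrt (M$i$i))"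
  have "q = (\<Sum>i\<in>UNIV. y$i * (M *v y)$i)" unfolding q_def inner_vec_def by simp
  also have "\<dots> \<le> (\<Sum>i\<in>UNIV. \<bar>y$i\<bar> * (sqrt (M$i$i) * sqrt q))"
  proof (rule sum_mono)
    fix i
    have "y$i * (M *v y)$i \<le> \<bar>y$i\<bar> * \<bar>(M *v y)$i\<bar>" by (simp add: abs_mult[symmetric])
    also have "\<dots> \<le> \<bar>y$i\<bar> * (sqrt (M$i$i) * sqrt q)" using comp by (simp add: mult_left_mono)
    finally show "y$i * (M *v y)$i \<le> \<bar>y$i\<bar> * (sqrt (M$i$i) * sqrt q)" .
  qed
  also have "\<dots> = sqrt q * T" unfolding T_def by (simp add: sum_distrib_left algebra_simps)
  finally have qT: "q \<le> sqrt q * T" .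
  have T2: "T^2 \<le> (norm y)^2 * trace M"
  proof -
    have "T^2 \<le> (\<Sum>i\<in>UNIV. (\<bar>y$i\<bar>)^2) * (\<Sum>i\<in>UNIV. (sqrt (M$i$i))^2)"
      unfolding T_def by (rule Cauchy_Schwarz_ineq_sum)
    also have "\<dots> = (norm y)^2 * trace M"
    proof -
      have "(\<Sum>i\<in>UNIV. (\<bar>y$i\<bar>)^2) = y \<bullet> y" by (simp add: inner_vec_def power2_eq_square)
      also have "\<dots> = (norm y)^2" by (simp add: power2_norm_eq_inner)
      finally show ?thesis using d0 by (simp add: trace_def)
    qed
    finally show ?thesis .
  qed
  show ?thesis
  proof (cases "q = 0")
    case True then show ?thesis using q_def by (simp add: trace_def sum_nonneg d0)
  next
    case False
    then have qp: "q > 0" using q0 by simp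
    have "q^2 \<le> (sqrt q * T)^2" using qT q0 by (simp add: power_mono)
    also have "\<dots> = q * T^2" using q0 by (simp add: power_mult_distrib)
    finally have "q * q \<le> q * T^2" by (simp add: power2_eq_square)
    then have "q \<le> T^2" using qp by simp
    then show ?thesis using T2 q_def by simp
  qed
qed

theorem lemma2:
  fixes Pstar Phat S :: "real^'n^'n" and m :: nat and L :: nat
    and \<beta> :: "nat \<Rightarrow> real^'n" and \<delta> :: real
  assumes "orth_projector Pstar m"
    and "L \<ge> 1"
    and "Phat \<in> feasible_set m"
    and "\<forall>P \<in> feasible_set m. objective L \<beta> Phat \<le> objective L \<beta> P"
    and "psd S" and "S ** S = Phat"
    and "0 \<le> \<delta>" and "\<delta> < 1"
    and "trace ((mat 1 - Phat) ** Pstar) \<le> \<delta>\<^sup>2"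
  shows "\<forall>x :: real^'n. norm (Pstar *v x) \<le> norm (S *v x) + \<delta> * norm x"
proof
  fix x :: "real^'n"
  define P where "P = Pstar"
  define Q where "Q = mat 1 - Phat"
  have Psym: "transpose P = P" and PP: "P ** P = P"
    using assms(1) unfolding P_def orth_projector_def by auto
  have Phsym: "transpose Phat = Phat" and Phpos: "\<forall>x. 0 \<le> x \<bullet> (Phat *v x)"
    and Qpos: "\<forall>x. 0 \<le> x \<bullet> (Q *v x)"
    using assms(3) unfolding feasible_set_def loewner_le_def psd_def Q_def by auto
  have Phij: "Phat$j$i = Phat$i$j" for i j
    using Phsym by (metis transpose_def vec_lambda_beta)
  have Qsym: "transpose Q = Q"
    using Phij by (simp add: Q_def transpose_def vec_eq_iff mat_def)
  have Ssym: "transpose S = S" using assms(5) unfolding psd_def by auto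
  have tr: "trace (Q ** P) \<le> \<delta>^2" using assms(9) Q_def P_def by simp
  define M where "M = P ** Q ** P"
  have Msym: "transpose M = M"
    by (simp add: M_def matrix_transpose_mul Psym Qsym matrix_mul_assoc)
  have Mv: "y \<bullet> (M *v y) = (P *v y) \<bullet> (Q *v (P *v y))" for y
  proof -
    have "y \<bullet> (M *v y) = y \<bullet> (P *v (Q *v (P *v y)))"
      by (simp add: M_def matrix_vector_mul_assoc matrix_mul_assoc)
    also have "\<dots> = (P *v y) \<bullet> (Q *v (P *v y))" using sym_adj[OF Psym] by simp
    finally show ?thesis .
  qed
  have Mpos: "\<forall>y. 0 \<le> y \<bullet> (M *v y)" using Mv Qpos by simp
  have trM: "trace M \<le> \<delta>^2"
  proof -
    have "trace M = trace (P ** (P ** Q))" unfolding M_def by (rule trace_mul_sym)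
    also have "\<dots> = trace (P ** Q)" by (simp add: matrix_mul_assoc PP)
    also have "\<dots> = trace (Q ** P)" by (rule trace_mul_sym)
    finally show ?thesis using tr by simp
  qed
  define u where "u = P *v (Q *v x)"
  have u2: "(norm u)^2 = (P *v u) \<bullet> (Q *v x)"
  proof -
    have "(norm u)^2 = u \<bullet> u" by (simp add: power2_norm_eq_inner)
    also have "\<dots> = (P *v (Q *v x)) \<bullet> u" by (simp add: u_def)
    also have "\<dots> = (Q *v x) \<bullet> (P *v u)" using sym_adj[OF Psym] by simp
    finally show ?thesis by (simp add: inner_commute)
  qed
  have cs: "((P *v u) \<bullet> (Q *v x))^2 \<le> ((P *v u) \<bullet> (Q *v (P *v u))) * (x \<bullet> (Q *v x))"
    using psd_cs[OF Qsym Qpos, of "P *v u" x] by simp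
  have b1: "(P *v u) \<bullet> (Q *v (P *v u)) \<le> (norm u)^2 * \<delta>^2"
  proof -
    have "(P *v u) \<bullet> (Q *v (P *v u)) = u \<bullet> (M *v u)" using Mv by simp
    also have "\<dots> \<le> (norm u)^2 * trace M" by (rule trace_bound[OF Msym Mpos])
    also have "\<dots> \<le> (norm u)^2 * \<delta>^2" using trM by (simp add: mult_left_mono)
    finally show ?thesis .
  qed
  have b2: "x \<bullet> (Q *v x) \<le> (norm x)^2"
    using Phpos unfolding Q_def
    by (simp add: matrix_vector_mult_diff_rdistrib inner_diff_right power2_norm_eq_inner)
  have "((norm u)^2)^2 \<le> ((norm u)^2 * \<delta>^2) * (norm x)^2"
  proof -
    have "((norm u)^2)^2 \<le> ((P *v u) \<bullet> (Q *v (P *v u))) * (x \<bullet> (Q *v x))"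
      using cs u2 by simp
    also have "\<dots> \<le> ((norm u)^2 * \<delta>^2) * (norm x)^2"
      by (rule mult_mono[OF b1 b2]) (simp_all add: Qpos)
    finally show ?thesis .
  qed
  then have h0: "(norm u)^2 * (norm u)^2 \<le> (norm u)^2 * (\<delta> * norm x)^2"
    by (simp add: power2_eq_square[of "(norm u)^2"] power_mult_distrib algebra_simps)
  have "(norm u)^2 \<le> (\<delta> * norm x)^2"
  proof (cases "norm u = 0")
    case True then show ?thesis by simp
  next
    case False
    then have pos: "0 < (norm u)^2" by simp
    show ?thesis using mult_le_cancel_left_pos[OF pos] h0 by blast
  qed
  then have ub: "norm u \<le> \<delta> * norm x"
    by (rule power2_le_imp_le) (simp add: assms(7))
  have projle: "norm (P *v v) \<le> norm v" for v
  proof -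
    have "(norm (P *v v))^2 = v \<bullet> (P *v v)"
      using sym_adj[OF Psym, of v "P *v v"]
      by (simp add: power2_norm_eq_inner matrix_vector_mul_assoc PP)
    moreover have "0 \<le> (v - P *v v) \<bullet> (v - P *v v)" by simp
    moreover have "(v - P *v v) \<bullet> (v - P *v v) = v \<bullet> v - v \<bullet> (P *v v)"
      using sym_adj[OF Psym, of v "P *v v"]
      by (simp add: inner_diff_left inner_diff_right matrix_vector_mul_assoc PP inner_commute)
    ultimately have "(norm (P *v v))^2 \<le> (norm v)^2" by (simp add: power2_norm_eq_inner)
    then show ?thesis by (rule power2_le_imp_le) simp_all
  qed
  have Sle: "norm (S *v w) \<le> norm w" for w
  proof -
    have "(norm (S *v w))^2 = w \<bullet> (Phat *v w)"
      using sym_adj[OF Ssym, of w "S *v w"] assms(6)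
      by (simp add: power2_norm_eq_inner matrix_vector_mul_assoc)
    also have "\<dots> \<le> (norm w)^2" using Qpos[rule_format, of w] unfolding Q_def
      by (simp add: matrix_vector_mult_diff_rdistrib inner_diff_right power2_norm_eq_inner)
    finally show ?thesis by (rule power2_le_imp_le) simp_all
  qed
  have dec: "Pstar *v x = P *v (S *v (S *v x)) + u"
  proof -
    have "Pstar *v x = P *v (Phat *v x + Q *v x)" by (simp add: P_def Q_def matrix_vector_mult_diff_rdistrib)
    also have "\<dots> = P *v (S *v (S *v x)) + u"
      by (simp add: u_def matrix_vector_right_distrib matrix_vector_mul_assoc assms(6))
    finally show ?thesis .
  qed
  have "norm (Pstar *v x) \<le> norm (P *v (S *v (S *v x))) + norm u"
    unfolding dec by (rule norm_triangle_ineq)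
  also have "\<dots> \<le> norm (S *v x) + \<delta> * norm x"
    using projle[of "S *v (S *v x)"] Sle[of "S *v x"] ub by linarith
  finally show "norm (Pstar *v x) \<le> norm (S *v x) + \<delta> * norm x" .
qed

end
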